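(* Let $(X,\Psi)$ be a $\sigma$-compact uniform space and $Y\subseteq X$. The following are equivalent: (1) $X$ satisfies $\textsf{S}_1(\Omega,\Omega_Y)$; (2) for each positive integer $k$, $\Omega\rightarrow(\Omega_Y)^2_k$ holds.
   Context: A uniformity on $X$ is a filter $\Psi$ on $X\times X$ whose members contain the diagonal, closed under $U\mapsto U^{-1}$, such that for each $U\in\Psi$ there is $V\in\Psi$ with $V\circ V\subseteq U$, and with $\bigcap\Psi$ equal to the diagonal; $X$ carries the topology with neighbourhood bases $\{U(x):U\in\Psi\}$, $U(x)=\{y:(x,y)\in U\}$. $\sigma$-compact: countable union of compact sets. $\Omega$ is the set of $\omega$-covers of $X$: open covers $\mathcal{U}$ with $X\notin\mathcal{U}$ such that each finite subset of $X$ lies in some member. $\Omega_Y$ is the set of $\omega$-covers of $Y$ by sets open in $X$: families of open subsets of $X$, none containing $Y$, such that each finite subset of $Y$ lies in some member. $\textsf{S}_1(\mathcal{A},\mathcal{B})$: for every sequence $(O_n)$ of elements of $\mathcal{A}$ there are $T_n\in O_n$ with $\{T_n:n\in\mathbb{N}\}\in\mathcal{B}$. $\mathcal{A}\rightarrow(\mathcal{B})^2_k$: for each $A\in\mathcal{A}$ and $f:[A]^2\to\{1,\dots,k\}$ there are $i$ and $B\subseteq A$, $B\in\mathcal{B}$, with $f$ constant equal to $i$ on the 2-element subsets of $B$. *)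

theory Defs
  imports Complex_Main "HOL-Library.Ramsey"
begin

definition uniformity_separated :: "('a::uniform_space) itself \<Rightarrow> bool" where
  "uniformity_separated _ \<longleftrightarrow>
     (\<forall>x y::'a. (\<forall>U. eventually (\<lambda>p. p \<in> U) uniformity \<longrightarrow> (x, y) \<in> U) \<longrightarrow> x = y)"

definition sigma_compact_space :: "('a::topological_space) itself \<Rightarrow> bool" where
  "sigma_compact_space _ \<longleftrightarrow> (\<exists>K :: nat \<Rightarrow> 'a set. (\<forall>n. compact (K n)) \<and> (\<Union>n. K n) = UNIV)"

definition omega_covers :: "('a::topological_space) set set set" where
  "omega_covers = {\<U>. (\<forall>U\<in>\<U>. open U) \<and> \<Union>\<U> = UNIV \<and> UNIV \<notin> \<U> \<and>
      (\<forall>F. finite F \<longrightarrow> (\<exists>U\<in>\<U>. F \<subseteq> U))}"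

definition omega_covers_of :: "('a::topological_space) set \<Rightarrow> 'a set set set" where
  "omega_covers_of Y = {\<U>. (\<forall>U\<in>\<U>. open U) \<and> (\<forall>U\<in>\<U>. \<not> Y \<subseteq> U) \<and>
      (\<forall>F. finite F \<and> F \<subseteq> Y \<longrightarrow> (\<exists>U\<in>\<U>. F \<subseteq> U))}"

definition S1 :: "'b set set \<Rightarrow> 'b set set \<Rightarrow> bool" where
  "S1 A B \<longleftrightarrow> (\<forall>\<O> :: nat \<Rightarrow> 'b set. (\<forall>n. \<O> n \<in> A) \<longrightarrow>
      (\<exists>T :: nat \<Rightarrow> 'b. (\<forall>n. T n \<in> \<O> n) \<and> range T \<in> B))"

definition partition_rel2 :: "'b set set \<Rightarrow> 'b set set \<Rightarrow> nat \<Rightarrow> bool" where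
  "partition_rel2 A B k \<longleftrightarrow> (\<forall>\<A>\<in>A. \<forall>f :: 'b set \<Rightarrow> nat. f ` ([\<A>]\<^bsup>2\<^esup>) \<subseteq> {1..k} \<longrightarrow>
      (\<exists>i\<in>{1..k}. \<exists>\<B>. \<B> \<subseteq> \<A> \<and> \<B> \<in> B \<and> (\<forall>P\<in>[\<B>]\<^bsup>2\<^esup>. f P = i)))"

end

theory Submission
  imports Defs "HOL-Library.Countable_Set"
begin

lemma omega_coversI:
  assumes "\<And>U. U \<in> \<U> \<Longrightarrow> open U" "UNIV \<notin> \<U>"
    "\<And>F. finite F \<Longrightarrow> \<exists>U\<in>\<U>. F \<subseteq> U"
  shows "\<U> \<in> omega_covers"
proof -
  have "\<Union>\<U> = UNIV"
  proof
    show "UNIV \<subseteq> \<Union>\<U>"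
    proof
      fix x obtain U where "U\<in>\<U>" "{x} \<subseteq> U" using assms(3)[of "{x}"] by auto
      then show "x \<in> \<Union>\<U>" by auto
    qed
  qed auto
  then show ?thesis using assms unfolding omega_covers_def by auto
qed

lemma omega_coversD:
  assumes "\<U> \<in> omega_covers"
  shows "\<And>U. U \<in> \<U> \<Longrightarrow> open U" "UNIV \<notin> \<U>" "\<And>F. finite F \<Longrightarrow> \<exists>U\<in>\<U>. F \<subseteq> U"
  using assms unfolding omega_covers_def by auto

lemma omega_covers_infinite:
  assumes "\<U> \<in> omega_covers" shows "infinite \<U>"
proof
  assume fin: "finite \<U>"
  have "\<forall>U\<in>\<U>. \<exists>p. p \<notin> U" using omega_coversD(2)[OF assms] by (metis UNIV_eq_I)
  then obtain p where p: "\<forall>U\<in>\<U>. p U \<notin> U" by metis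
  obtain U where "U \<in> \<U>" "p ` \<U> \<subseteq> U" using omega_coversD(3)[OF assms, of "p ` \<U>"] fin by auto
  then show False using p by auto
qed

lemma omega_covers_UNIV_infinite:
  assumes "(\<U>::'a::topological_space set set) \<in> omega_covers" shows "infinite (UNIV::'a set)"
proof
  assume "finite (UNIV::'a set)"
  then obtain U where "U \<in> \<U>" "(UNIV::'a set) \<subseteq> U" using omega_coversD(3)[OF assms] by blast
  then show False using omega_coversD(2)[OF assms] by (metis subset_UNIV subset_antisym)
qed

lemma sep_open_compl:
  assumes "uniformity_separated TYPE('a::uniform_space)"
  shows "open (- {p::'a})"
  unfolding open_uniformity
proof
  fix x assume "x \<in> - {p}"
  then have "x \<noteq> p" by auto
  then obtain U where U: "eventually (\<lambda>q. q \<in> U) uniformity" "(x, p) \<notin> U"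
    using assms unfolding uniformity_separated_def by blast
  show "\<forall>\<^sub>F (x', y) in uniformity. x' = x \<longrightarrow> y \<in> - {p}"
    using U(1) by (rule eventually_mono) (use U(2) in auto)
qed

lemma omega_covers_ofD:
  assumes "\<U> \<in> omega_covers_of Y" "finite F" "F \<subseteq> Y"
  shows "\<exists>U\<in>\<U>. F \<subseteq> U"
  using assms unfolding omega_covers_of_def by blast

lemma omega_covers_of_nonempty:
  assumes "\<U> \<in> omega_covers_of Y" shows "\<U> \<noteq> {}"
  using assms unfolding omega_covers_of_def by fastforce

lemma omega_covers_of_finite_empty:
  assumes "finite Y" shows "omega_covers_of Y = {}"
  using assms unfolding omega_covers_of_def by blast

lemma compact_omega_finite:
  fixes K :: "'a::topological_space set"
  assumes "compact K" "\<And>U. U \<in> \<U> \<Longrightarrow> open U"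
    and "\<And>F. finite F \<Longrightarrow> F \<subseteq> K \<Longrightarrow> card F \<le> m \<Longrightarrow> \<exists>U\<in>\<U>. G \<union> F \<subseteq> U"
  shows "\<exists>\<V>\<subseteq>\<U>. finite \<V> \<and> (\<forall>F. finite F \<and> F \<subseteq> K \<and> card F \<le> m \<longrightarrow> (\<exists>U\<in>\<V>. G \<union> F \<subseteq> U))"
  using assms(3)
proof (induction m arbitrary: G)
  case 0
  then obtain U where "U \<in> \<U>" "G \<subseteq> U" by force
  then show ?case by (intro exI[of _ "{U}"]) auto
next
  case (Suc m)
  obtain U0 where U0: "U0 \<in> \<U>" "G \<subseteq> U0" using Suc.prems[of "{}"] by auto
  have "\<forall>x\<in>K. \<exists>\<V>. \<V> \<subseteq> \<U> \<and> finite \<V> \<and> (\<forall>F. finite F \<and> F \<subseteq> K \<and> card F \<le> m \<longrightarrow> (\<exists>U\<in>\<V>. (G \<union> {x}) \<union> F \<subseteq> U))"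
  proof
    fix x assume x: "x \<in> K"
    have "\<exists>\<V>\<subseteq>\<U>. finite \<V> \<and> (\<forall>F. finite F \<and> F \<subseteq> K \<and> card F \<le> m \<longrightarrow> (\<exists>U\<in>\<V>. (G \<union> {x}) \<union> F \<subseteq> U))"
    proof (rule Suc.IH)
      fix F assume F: "finite F" "F \<subseteq> K" "card F \<le> m"
      then have "finite (insert x F)" "insert x F \<subseteq> K" "card (insert x F) \<le> Suc m"
        using x by (auto simp: card_insert_if)
      then obtain U where "U \<in> \<U>" "G \<union> insert x F \<subseteq> U" using Suc.prems by blast
      then show "\<exists>U\<in>\<U>. (G \<union> {x}) \<union> F \<subseteq> U" by auto
    qed
    then show "\<exists>\<V>. \<V> \<subseteq> \<U> \<and> finite \<V> \<and> (\<forall>F. finite F \<and> F \<subseteq> K \<and> card F \<le> m \<longrightarrow> (\<exists>U\<in>\<V>. (G \<union> {x}) \<union> F \<subseteq> U))"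
      by blast
  qed
  then obtain VV where VV: "\<And>x. x \<in> K \<Longrightarrow> VV x \<subseteq> \<U> \<and> finite (VV x) \<and> (\<forall>F. finite F \<and> F \<subseteq> K \<and> card F \<le> m \<longrightarrow> (\<exists>U\<in>VV x. (G \<union> {x}) \<union> F \<subseteq> U))"
    by metis
  define N where "N x = \<Inter>{V \<in> VV x. x \<in> V}" for x
  have Nopen: "open (N x)" if "x \<in> K" for x
    unfolding N_def using VV[OF that] assms(2) by (intro open_Inter) auto
  have "K \<subseteq> (\<Union>x\<in>K. N x)" unfolding N_def by auto
  then obtain K0 where K0: "K0 \<subseteq> K" "finite K0" "K \<subseteq> (\<Union>x\<in>K0. N x)"
    using compactE_image[OF assms(1), of K N] Nopen by blast
  define \<V> where "\<V> = insert U0 (\<Union>x\<in>K0. VV x)"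
  have "\<V> \<subseteq> \<U>" "finite \<V>" unfolding \<V>_def using U0 VV K0 by (auto, blast)
  moreover have "\<exists>U\<in>\<V>. G \<union> F \<subseteq> U" if F: "finite F" "F \<subseteq> K" "card F \<le> Suc m" for F
  proof (cases "F = {}")
    case True then show ?thesis using U0 unfolding \<V>_def by auto
  next
    case False
    then obtain x' where x': "x' \<in> F" by auto
    then obtain x where x: "x \<in> K0" "x' \<in> N x" using K0 F by blast
    have "card (F - {x'}) \<le> m" using F x' by auto
    moreover have "x \<in> K" using x K0 by auto
    ultimately have "\<exists>U\<in>VV x. (G \<union> {x}) \<union> (F - {x'}) \<subseteq> U"
      using VV[of x] F by blast
    then obtain V where V: "V \<in> VV x" "(G \<union> {x}) \<union> (F - {x'}) \<subseteq> V"
      by blast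
    then have "N x \<subseteq> V" unfolding N_def by auto
    then have "G \<union> F \<subseteq> V" using V x x' by auto
    then show ?thesis using V x unfolding \<V>_def by auto
  qed
  ultimately show ?case by blast
qed

lemma my_compact_Un:
  assumes "compact S" and "compact T"
  shows "compact (S \<union> T)"
proof (rule compactI)
  fix f
  assume *: "\<forall>t\<in>f. open t" "S \<union> T \<subseteq> \<Union>f"
  obtain s' where "s' \<subseteq> f \<and> finite s' \<and> S \<subseteq> \<Union>s'"
  proof (rule compactE[OF \<open>compact S\<close>, of f])
    show "S \<subseteq> \<Union>f" using *(2) by blast
  qed (use * in auto)
  moreover
  obtain t' where "t' \<subseteq> f \<and> finite t' \<and> T \<subseteq> \<Union>t'"
  proof (rule compactE[OF \<open>compact T\<close>, of f])
    show "T \<subseteq> \<Union>f" using *(2) by blast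
  qed (use * in auto)
  ultimately show "\<exists>f'. f' \<subseteq> f \<and> finite f' \<and> S \<union> T \<subseteq> \<Union>f'"
    by (auto intro!: exI[of _ "s' \<union> t'"])
qed

lemma compact_UN_atMost:
  assumes "\<And>n. compact (K n)"
  shows "compact (\<Union>j\<le>(n::nat). K j)"
proof (induction n)
  case 0 then show ?case using assms by simp
next
  case (Suc n)
  have "(\<Union>j\<le>Suc n. K j) = (\<Union>j\<le>n. K j) \<union> K (Suc n)" by (auto simp: le_Suc_eq)
  then show ?case using Suc my_compact_Un assms by metis
qed

lemma sigma_compact_countable_omega:
  assumes "sigma_compact_space TYPE('a::topological_space)" "(\<U>::'a set set) \<in> omega_covers"
  shows "\<exists>\<V>\<subseteq>\<U>. countable \<V> \<and> \<V> \<in> omega_covers"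
proof -
  obtain K :: "nat \<Rightarrow> 'a set" where K: "\<And>n. compact (K n)" "(\<Union>n. K n) = UNIV"
    using assms(1) unfolding sigma_compact_space_def by blast
  define K' where "K' n = (\<Union>j\<le>n. K j)" for n
  have cK': "compact (K' n)" for n unfolding K'_def using K(1) by (rule compact_UN_atMost)
  have "\<forall>n m. \<exists>\<V>. \<V>\<subseteq>\<U> \<and> finite \<V> \<and> (\<forall>F. finite F \<and> F \<subseteq> K' n \<and> card F \<le> m \<longrightarrow> (\<exists>U\<in>\<V>. {} \<union> F \<subseteq> U))"
  proof (intro allI)
    fix n m
    show "\<exists>\<V>. \<V>\<subseteq>\<U> \<and> finite \<V> \<and> (\<forall>F. finite F \<and> F \<subseteq> K' n \<and> card F \<le> m \<longrightarrow> (\<exists>U\<in>\<V>. {} \<union> F \<subseteq> U))"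
      by (rule compact_omega_finite[OF cK'[of n]]) (use omega_coversD(1,3)[OF assms(2)] in auto)
  qed
  define VV where "VV n m = (SOME \<V>. \<V>\<subseteq>\<U> \<and> finite \<V> \<and> (\<forall>F. finite F \<and> F \<subseteq> K' n \<and> card F \<le> m \<longrightarrow> (\<exists>U\<in>\<V>. {} \<union> F \<subseteq> U)))" for n m
  have VV: "VV n m \<subseteq> \<U> \<and> finite (VV n m) \<and> (\<forall>F. finite F \<and> F \<subseteq> K' n \<and> card F \<le> m \<longrightarrow> (\<exists>U\<in>VV n m. {} \<union> F \<subseteq> U))" for n m
    unfolding VV_def by (rule someI_ex) (use \<open>\<forall>n m. _\<close> in blast)
  define \<V> where "\<V> = (\<Union>n. \<Union>m. VV n m)"
  have cVV: "countable (VV n m)" for n m using VV[of n m] countable_finite by blast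
  have cnt: "countable \<V>" unfolding \<V>_def using cVV by (intro countable_UN) auto
  have sub: "\<V> \<subseteq> \<U>" using VV unfolding \<V>_def by blast
  have Fin: "\<exists>n. F \<subseteq> K' n" if "finite F" for F
    using that
  proof (induction F rule: finite_induct)
    case empty then show ?case by auto
  next
    case (insert x F)
    then obtain n where n: "F \<subseteq> K' n" by auto
    obtain j where j: "x \<in> K j" using K(2) by blast
    have "K' n \<subseteq> K' (max n j)" unfolding K'_def by (intro UN_mono) auto
    moreover have "K j \<subseteq> K' (max n j)" unfolding K'_def by (intro UN_upper) simp
    ultimately have "insert x F \<subseteq> K' (max n j)" using n j by blast
    then show ?case by blast
  qed
  have "\<V> \<in> omega_covers"
  proof (rule omega_coversI)
    show "open U" if "U \<in> \<V>" for U using that sub omega_coversD(1)[OF assms(2)] by blast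
    show "UNIV \<notin> \<V>" using sub omega_coversD(2)[OF assms(2)] by blast
    show "\<exists>U\<in>\<V>. F \<subseteq> U" if Ff: "finite F" for F
    proof -
      obtain n where "F \<subseteq> K' n" using Fin[OF Ff] by blast
      then have "\<exists>U\<in>VV n (card F). {} \<union> F \<subseteq> U" using VV[of n "card F"] Ff by blast
      then obtain U where "U \<in> VV n (card F)" "F \<subseteq> U" by auto
      then show ?thesis unfolding \<V>_def by blast
    qed
  qed
  then show ?thesis using cnt sub by blast
qed

primrec greedy :: "(nat \<Rightarrow> 'b set) \<Rightarrow> ('b \<Rightarrow> 'b \<Rightarrow> bool) \<Rightarrow> nat \<Rightarrow> 'b set" where
  "greedy Q r 0 = {}"
| "greedy Q r (Suc n) = insert (SOME x. x \<in> Q n \<and> (\<forall>y\<in>greedy Q r n. r x y)) (greedy Q r n)"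

lemma greedy_choice:
  assumes "\<And>n R. finite R \<Longrightarrow> card R \<le> n \<Longrightarrow> \<exists>x\<in>Q n. \<forall>y\<in>R. r x y"
  shows "\<exists>q. \<forall>n. q n \<in> Q n \<and> (\<forall>m<n. r (q n) (q m))"
proof -
  define q where "q n = (SOME x. x \<in> Q n \<and> (\<forall>y\<in>greedy Q r n. r x y))" for n
  have G: "greedy Q r n = q ` {..<n}" for n
    by (induction n) (auto simp: q_def lessThan_Suc)
  have *: "q n \<in> Q n \<and> (\<forall>y\<in>greedy Q r n. r (q n) y)" for n
  proof -
    have "finite (greedy Q r n)" "card (greedy Q r n) \<le> n"
      using G[of n] card_image_le[of "{..<n}" q] by auto
    then have "\<exists>x. x \<in> Q n \<and> (\<forall>y\<in>greedy Q r n. r x y)" using assms by blast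
    then show ?thesis unfolding q_def by (rule someI_ex)
  qed
  have "\<forall>n. q n \<in> Q n \<and> (\<forall>m<n. r (q n) (q m))" using * G by auto
  then show ?thesis by blast
qed
primrec Pseq :: "(nat \<Rightarrow> nat set \<Rightarrow> nat set) \<Rightarrow> nat \<Rightarrow> nat set" where
  "Pseq g 0 = UNIV"
| "Pseq g (Suc n) = g n (Pseq g n)"

primrec blkL :: "(nat \<Rightarrow> nat) \<Rightarrow> nat \<Rightarrow> nat" where
  "blkL t 0 = 0"
| "blkL t (Suc j) = Suc (Max (t ` {..blkL t j}))"

locale ramsey_ctx =
  fixes a :: "nat \<Rightarrow> 'a::topological_space set" and Z :: "'a set"
  assumes a_open: "\<And>j. open (a j)" and a_nU: "\<And>j. a j \<noteq> UNIV" and a_Z: "\<And>j. Z \<subseteq> a j"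
    and S1Z: "\<And>Cv :: nat \<Rightarrow> 'a set set. (\<And>n. Cv n \<in> omega_covers) \<Longrightarrow> (\<And>n V. V \<in> Cv n \<Longrightarrow> Z \<subseteq> V) \<Longrightarrow>
        \<exists>T. (\<forall>n. T n \<in> Cv n) \<and> (\<forall>F. finite F \<longrightarrow> (\<exists>n. F \<subseteq> T n))"
begin

definition pos :: "nat set \<Rightarrow> bool" where
  "pos S \<longleftrightarrow> (\<forall>F. finite F \<longrightarrow> (\<exists>j\<in>S. F \<subseteq> a j))"

lemma pos_mono: "pos S \<Longrightarrow> S \<subseteq> T \<Longrightarrow> pos T"
  unfolding pos_def by blast

lemma pos_empty: "\<not> pos {}"
  unfolding pos_def by auto

lemma pos_Un: assumes "pos (S \<union> T)" shows "pos S \<or> pos T"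
proof (rule ccontr)
  assume "\<not> (pos S \<or> pos T)"
  then obtain F1 F2 where "finite F1" "\<forall>j\<in>S. \<not> F1 \<subseteq> a j" "finite F2" "\<forall>j\<in>T. \<not> F2 \<subseteq> a j"
    unfolding pos_def by blast
  moreover obtain j where "j \<in> S \<union> T" "F1 \<union> F2 \<subseteq> a j"
  proof -
    have "finite (F1 \<union> F2)" using \<open>finite F1\<close> \<open>finite F2\<close> by simp
    then show ?thesis using assms that unfolding pos_def by blast
  qed
  ultimately show False by auto
qed

lemma pos_UN: assumes "finite I" "pos (\<Union>i\<in>I. S i)" shows "\<exists>i\<in>I. pos (S i)"
  using assms
proof (induction I rule: finite_induct)
  case empty then show ?case using pos_empty by simp
next
  case (insert x I)
  then have "pos (S x \<union> (\<Union>i\<in>I. S i))" by simp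
  then show ?case using insert pos_Un by blast
qed

lemma pos_diff: assumes "pos S" "finite E" shows "pos (S - E)"
  unfolding pos_def
proof (intro allI impI)
  fix F :: "'a set" assume F: "finite F"
  have "\<forall>j. \<exists>p. p \<notin> a j" using a_nU by (metis UNIV_eq_I)
  then obtain p where p: "\<And>j. p j \<notin> a j" by metis
  have "finite (F \<union> p ` E)" using assms F by simp
  then obtain j where j: "j \<in> S" "F \<union> p ` E \<subseteq> a j" using assms unfolding pos_def
    by blast
  then have "j \<notin> E" using p by auto
  then show "\<exists>j\<in>S - E. F \<subseteq> a j" using j by auto
qed

lemma pos_restrict: assumes "pos S" "finite F" shows "pos {j\<in>S. F \<subseteq> a j}"
  unfolding pos_def
proof (intro allI impI)
  fix G :: "'a set" assume "finite G"
  then have "finite (F \<union> G)" using assms by simp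
  then obtain j where "j \<in> S" "F \<union> G \<subseteq> a j" using assms unfolding pos_def by blast
  then show "\<exists>j\<in>{j\<in>S. F \<subseteq> a j}. G \<subseteq> a j" by auto
qed

lemma pos_infinite: assumes "pos S" shows "infinite S"
proof
  assume "finite S"
  then have "pos (S - S)" using pos_diff[OF assms] by blast
  then show False using pos_empty by simp
qed

lemma pos_image_omega: assumes "pos S" shows "a ` S \<in> omega_covers"
proof (rule omega_coversI)
  show "UNIV \<notin> a ` S" using a_nU by (metis imageE)
qed (use assms a_open in \<open>auto simp: pos_def\<close>)


lemma step2:
  assumes pt: "pos (range t)" and tm: "\<And>m. m \<le> t m"
  shows "\<exists>q :: nat \<Rightarrow> nat. pos (range (t \<circ> q)) \<and> (\<forall>n n'. n \<noteq> n' \<longrightarrow> t (q n) < q n' \<or> t (q n') < q n)"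
proof -
  define L where "L = blkL t"
  have L1: "t m < L (Suc (Suc j))" if "m < L (Suc j)" for m j
  proof -
    have "t m \<le> Max (t ` {..L (Suc j)})" using that by (intro Max_ge) auto
    then show ?thesis unfolding L_def by simp
  qed
  have Lsuc: "L j < L (Suc j)" for j
  proof -
    have "L j \<le> t (L j)" by (rule tm)
    also have "\<dots> \<le> Max (t ` {..L j})" by (intro Max_ge) auto
    finally show ?thesis unfolding L_def by simp
  qed
  have smL: "strict_mono L" using Lsuc by (simp add: strict_mono_Suc_iff)
  have Lge: "j \<le> L j" for j using strict_mono_imp_increasing[OF smL] .
  define blk where "blk m = (LEAST j. m < L (Suc j))" for m
  have b1: "m < L (Suc (blk m))" for m
  proof -
    have "m < L (Suc m)" using Lge[of "Suc m"] by simp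
    then show ?thesis unfolding blk_def by (rule LeastI)
  qed
  have b2: "L (blk m) \<le> m" for m
  proof (cases "blk m")
    case 0 then show ?thesis unfolding L_def by simp
  next
    case (Suc j)
    then have "j < blk m" by simp
    then have "\<not> m < L (Suc j)" unfolding blk_def by (rule not_less_Least)
    then show ?thesis using Suc by simp
  qed
  have farD: "t m < m'" if "blk m + 2 \<le> blk m'" for m m'
  proof -
    have "t m < L (Suc (Suc (blk m)))" using L1 b1 by blast
    also have "\<dots> \<le> L (blk m')" using that smL by (simp add: strict_mono_less_eq)
    also have "\<dots> \<le> m'" by (rule b2)
    finally show ?thesis .
  qed
  have finblk: "finite {m. blk m = j}" for j
  proof -
    have "{m. blk m = j} \<subseteq> {..< L (Suc j)}" using b1 by auto
    then show ?thesis using finite_subset by blast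
  qed
  have infblk: "infinite (blk ` M)" if "infinite M" for M
  proof
    assume "finite (blk ` M)"
    then have "finite (\<Union>j\<in>blk ` M. {m. blk m = j})" using finblk by blast
    moreover have "M \<subseteq> (\<Union>j\<in>blk ` M. {m. blk m = j})" by auto
    ultimately show False using that finite_subset by blast
  qed
  have MF: "infinite {m. F \<subseteq> a (t m)}" if "finite F" for F
  proof
    assume fin: "finite {m. F \<subseteq> a (t m)}"
    have "{j\<in>range t. F \<subseteq> a j} = t ` {m. F \<subseteq> a (t m)}" by auto
    then have "finite {j\<in>range t. F \<subseteq> a j}" using fin by simp
    then show False using pos_infinite[OF pos_restrict[OF pt that]] by simp
  qed
  define Cv where "Cv n = (\<lambda>Q. \<Inter>q\<in>Q. a (t q)) ` {Q. finite Q \<and> 3*n+1 \<le> card (blk ` Q)}" for n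
  have Cvom: "Cv n \<in> omega_covers" for n
  proof (rule omega_coversI)
    fix U assume "U \<in> Cv n"
    then obtain Q where Q: "finite Q" "U = (\<Inter>q\<in>Q. a (t q))" unfolding Cv_def by auto
    then show "open U" using a_open by auto
  next
    show "UNIV \<notin> Cv n"
    proof
      assume "UNIV \<in> Cv n"
      then obtain Q where Q: "finite Q" "3*n+1 \<le> card (blk ` Q)" "UNIV = (\<Inter>q\<in>Q. a (t q))"
        unfolding Cv_def by auto
      then have "Q \<noteq> {}" by auto
      then obtain q where "q \<in> Q" by auto
      then have "a (t q) = UNIV" using Q(3) by auto
      then show False using a_nU by blast
    qed
  next
    fix F :: "'a set" assume F: "finite F"
    obtain B' where B': "finite B'" "card B' = 3*n+1" "B' \<subseteq> blk ` {m. F \<subseteq> a (t m)}"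
      using infinite_arbitrarily_large[OF infblk[OF MF[OF F]]] by blast
    obtain Q where Q: "Q \<subseteq> {m. F \<subseteq> a (t m)}" "finite Q" "B' = blk ` Q"
      using finite_subset_image[OF B'(1) B'(3)] by blast
    then have "Q \<in> {Q. finite Q \<and> 3*n+1 \<le> card (blk ` Q)}" using B' by simp
    then have "(\<Inter>q\<in>Q. a (t q)) \<in> Cv n" unfolding Cv_def by (rule imageI)
    moreover have "F \<subseteq> (\<Inter>q\<in>Q. a (t q))" using Q by auto
    ultimately show "\<exists>U\<in>Cv n. F \<subseteq> U" by blast
  qed
  have CvZ: "Z \<subseteq> V" if "V \<in> Cv n" for n V using that a_Z unfolding Cv_def by auto
  have "\<exists>T. (\<forall>n. T n \<in> Cv n) \<and> (\<forall>F. finite F \<longrightarrow> (\<exists>n. F \<subseteq> T n))"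
    by (rule S1Z) (use Cvom CvZ in auto)
  then obtain W where W: "\<And>n. W n \<in> Cv n" "\<And>F. finite F \<Longrightarrow> \<exists>n. F \<subseteq> W n"
    by blast
  have exQ: "\<exists>Q. finite Q \<and> 3*n+1 \<le> card (blk ` Q) \<and> W n = (\<Inter>q\<in>Q. a (t q))" for n
  proof -
    have "W n \<in> Cv n" by (rule W(1))
    then obtain Q where "Q \<in> {Q. finite Q \<and> 3*n+1 \<le> card (blk ` Q)}" "W n = (\<Inter>q\<in>Q. a (t q))"
      unfolding Cv_def by (rule imageE)
    then show ?thesis by blast
  qed
  define QQ where "QQ n = (SOME Q. finite Q \<and> 3*n+1 \<le> card (blk ` Q) \<and> W n = (\<Inter>q\<in>Q. a (t q)))" for n
  have QQ: "finite (QQ n) \<and> 3*n+1 \<le> card (blk ` QQ n) \<and> W n = (\<Inter>q\<in>QQ n. a (t q))" for n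
    unfolding QQ_def by (rule someI_ex[OF exQ])
  define r where "r x y = (blk x + 2 \<le> blk y \<or> blk y + 2 \<le> blk x)" for x y
  have ex: "\<exists>x\<in>QQ n. \<forall>y\<in>R. r x y" if R: "finite R" "card R \<le> n" for n R
  proof -
    define F1 where "F1 = (\<lambda>y. blk y - 1) ` R"
    define F2 where "F2 = blk ` R"
    define F3 where "F3 = (\<lambda>y. Suc (blk y)) ` R"
    have "card (F1 \<union> F2 \<union> F3) \<le> card F1 + card F2 + card F3"
      using card_Un_le[of "F1 \<union> F2" F3] card_Un_le[of F1 F2] by linarith
    moreover have "card F1 \<le> card R" "card F2 \<le> card R" "card F3 \<le> card R"
      unfolding F1_def F2_def F3_def by (rule card_image_le[OF R(1)])+
    ultimately have cF: "card (F1 \<union> F2 \<union> F3) \<le> 3 * n" using R(2) by linarith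
    have fF: "finite (F1 \<union> F2 \<union> F3)" unfolding F1_def F2_def F3_def using R(1) by simp
    have "\<not> blk ` QQ n \<subseteq> F1 \<union> F2 \<union> F3"
    proof
      assume "blk ` QQ n \<subseteq> F1 \<union> F2 \<union> F3"
      then have "card (blk ` QQ n) \<le> card (F1 \<union> F2 \<union> F3)" using fF by (rule card_mono[rotated])
      then show False using cF QQ[of n] by linarith
    qed
    then obtain x where x: "x \<in> QQ n" "blk x \<notin> F1 \<union> F2 \<union> F3" by auto
    have "r x y" if "y \<in> R" for y
    proof -
      have "blk x \<noteq> blk y - 1" "blk x \<noteq> blk y" "blk x \<noteq> Suc (blk y)"
        using x(2) that unfolding F1_def F2_def F3_def by auto
      then show ?thesis unfolding r_def by linarith
    qed
    then show ?thesis using x(1) by blast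
  qed
  obtain q where q: "\<And>n. q n \<in> QQ n" "\<And>n m. m < n \<Longrightarrow> r (q n) (q m)"
    using greedy_choice[of QQ r, OF ex] by blast
  have "pos (range (t \<circ> q))"
    unfolding pos_def
  proof (intro allI impI)
    fix F :: "'a set" assume "finite F"
    then obtain n where "F \<subseteq> W n" using W(2) by blast
    also have "W n \<subseteq> a (t (q n))" using QQ[of n] q(1)[of n] by auto
    finally show "\<exists>j\<in>range (t \<circ> q). F \<subseteq> a j" by auto
  qed
  moreover have "t (q n) < q n' \<or> t (q n') < q n" if "n \<noteq> n'" for n n'
  proof -
    have "r (q n) (q n')"
    proof (cases "n' < n")
      case True then show ?thesis by (rule q(2))
    next
      case False
      then have "n < n'" using that by linarith
      then have "r (q n') (q n)" by (rule q(2))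
      then show ?thesis unfolding r_def by linarith
    qed
    then have "blk (q n) + 2 \<le> blk (q n') \<or> blk (q n') + 2 \<le> blk (q n)" unfolding r_def .
    then show ?thesis
    proof
      assume "blk (q n) + 2 \<le> blk (q n')"
      then show ?thesis using farD[of "q n" "q n'"] by simp
    next
      assume "blk (q n') + 2 \<le> blk (q n)"
      then show ?thesis using farD[of "q n'" "q n"] by simp
    qed
  qed
  ultimately have "pos (range (t \<circ> q)) \<and> (\<forall>n n'. n \<noteq> n' \<longrightarrow> t (q n) < q n' \<or> t (q n') < q n)"
    by blast
  then show ?thesis by (rule exI[of _ q])
qed

lemma step1:
  fixes f :: "'a set set \<Rightarrow> nat" and k :: nat
  assumes pU: "pos UNIV" and fk: "\<And>n j. j \<noteq> n \<Longrightarrow> f {a n, a j} \<in> {1..k}"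
  shows "\<exists>i\<in>{1..k}. \<exists>t. pos (range t) \<and> (\<forall>m. m \<le> t m) \<and>
           (\<forall>m m'. t m < m' \<longrightarrow> t m \<noteq> t m' \<longrightarrow> f {a (t m), a (t m')} = i)"
proof -
  define Nb where "Nb i n = {j. j \<noteq> n \<and> f {a n, a j} = i}" for i n
  define col where "col n P = (SOME i. i \<in> {1..k} \<and> pos (P \<inter> Nb i n))" for n P
  define P where "P = Pseq (\<lambda>n Q. Q \<inter> Nb (col n Q) n)"
  define c where "c n = col n (P n)" for n
  have PS: "P (Suc n) = P n \<inter> Nb (c n) n" for n unfolding P_def c_def by simp
  have P0: "P 0 = UNIV" unfolding P_def by simp
  have split: "\<exists>i. i \<in> {1..k} \<and> pos (S \<inter> Nb i n)" if "pos S" for S n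
  proof -
    have "pos (S - {n})" using pos_diff[OF that] by simp
    moreover have "S - {n} \<subseteq> (\<Union>i\<in>{1..k}. S \<inter> Nb i n)"
    proof
      fix x assume x: "x \<in> S - {n}"
      then have "f {a n, a x} \<in> {1..k}" using fk[of x n] by auto
      then show "x \<in> (\<Union>i\<in>{1..k}. S \<inter> Nb i n)" using x unfolding Nb_def by auto
    qed
    ultimately have "pos (\<Union>i\<in>{1..k}. S \<inter> Nb i n)" by (rule pos_mono)
    then show ?thesis using pos_UN[of "{1..k}" "\<lambda>i. S \<inter> Nb i n"] by auto
  qed
  have cprop: "c n \<in> {1..k} \<and> pos (P n \<inter> Nb (c n) n)" if "pos (P n)" for n
    unfolding c_def col_def by (rule someI_ex[OF split[OF that]])
  have posP: "pos (P n)" for n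
  proof (induction n)
    case 0 then show ?case using P0 pU by simp
  next
    case (Suc n) then show ?case using cprop[OF Suc] PS by simp
  qed
  have cK: "c n \<in> {1..k}" for n using cprop posP by blast
  have Pdec: "P n' \<subseteq> P n" if "n \<le> n'" for n n'
    using lift_Suc_antimono_le[of P, OF _ that] PS by blast
  have nP: "n \<notin> P (Suc n)" for n using PS unfolding Nb_def by auto
  have PN: "P (Suc n) \<subseteq> Nb (c n) n" for n using PS by auto
  define C where "C i = {n. c n = i}" for i
  have "\<exists>i\<in>{1..k}. \<forall>m. pos (P m \<inter> C i)"
  proof (rule ccontr)
    assume "\<not> (\<exists>i\<in>{1..k}. \<forall>m. pos (P m \<inter> C i))"
    then have "\<forall>i\<in>{1..k}. \<exists>m. \<not> pos (P m \<inter> C i)" by blast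
    then obtain mm where mm: "\<And>i. i \<in> {1..k} \<Longrightarrow> \<not> pos (P (mm i) \<inter> C i)" by metis
    define M where "M = Max (mm ` {1..k})"
    have "P M \<subseteq> (\<Union>i\<in>{1..k}. P M \<inter> C i)" using cK unfolding C_def by auto
    then have "pos (\<Union>i\<in>{1..k}. P M \<inter> C i)" using posP pos_mono by blast
    then obtain i where i: "i \<in> {1..k}" "pos (P M \<inter> C i)"
      using pos_UN[of "{1..k}" "\<lambda>i. P M \<inter> C i"] by auto
    have "mm i \<le> M" unfolding M_def using i(1) by (intro Max_ge) auto
    then have "P M \<inter> C i \<subseteq> P (mm i) \<inter> C i" using Pdec by blast
    then have "pos (P (mm i) \<inter> C i)" using i(2) pos_mono by blast
    then show False using mm i(1) by blast
  qed
  then obtain i where i: "i \<in> {1..k}" "\<And>m. pos (P m \<inter> C i)" by blast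
  define D where "D m = P m \<inter> C i" for m
  have Dom: "a ` D m \<in> omega_covers" for m using pos_image_omega i(2) unfolding D_def by blast
  have DZ: "Z \<subseteq> V" if "V \<in> a ` D m" for m V using that a_Z by auto
  have "\<exists>T. (\<forall>n. T n \<in> a ` D n) \<and> (\<forall>F. finite F \<longrightarrow> (\<exists>n. F \<subseteq> T n))"
    by (rule S1Z) (use Dom DZ in auto)
  then obtain T where T: "\<And>n. T n \<in> a ` D n" "\<And>F. finite F \<Longrightarrow> \<exists>n. F \<subseteq> T n"
    by blast
  have "\<forall>n. \<exists>j. j \<in> D n \<and> T n = a j" using T(1) by blast
  then obtain t where t: "\<And>n. t n \<in> D n" "\<And>n. T n = a (t n)" by metis
  have pt: "pos (range t)"
    unfolding pos_def
  proof (intro allI impI)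
    fix F :: "'a set" assume "finite F"
    then obtain n where "F \<subseteq> T n" using T(2) by blast
    then show "\<exists>j\<in>range t. F \<subseteq> a j" using t(2) by auto
  qed
  have tm: "m \<le> t m" for m
  proof (rule ccontr)
    assume "\<not> m \<le> t m"
    then have "Suc (t m) \<le> m" by simp
    then have "P m \<subseteq> P (Suc (t m))" by (rule Pdec)
    moreover have "t m \<in> P m" using t(1)[of m] unfolding D_def by auto
    ultimately show False using nP by blast
  qed
  have adj: "f {a (t m), a (t m')} = i" if "t m < m'" "t m \<noteq> t m'" for m m'
  proof -
    have "t m' \<in> P m'" using t(1)[of m'] unfolding D_def by auto
    moreover have "P m' \<subseteq> P (Suc (t m))" using that(1) by (intro Pdec) simp
    ultimately have "t m' \<in> Nb (c (t m)) (t m)" using PN by blast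
    moreover have "c (t m) = i" using t(1)[of m] unfolding D_def C_def by auto
    ultimately show ?thesis unfolding Nb_def by simp
  qed
  show ?thesis using i(1) pt tm adj by blast
qed

lemma ramsey_core:
  fixes f :: "'a set set \<Rightarrow> nat"
  assumes pU: "pos UNIV" and fk: "\<And>n j. j \<noteq> n \<Longrightarrow> f {a n, a j} \<in> {1..k}"
  shows "\<exists>i\<in>{1..k}. \<exists>B\<subseteq>range a. B \<in> omega_covers \<and> (\<forall>P\<in>[B]\<^bsup>2\<^esup>. f P = i)"
proof -
  obtain i t where i: "i \<in> {1..k}" and pt: "pos (range t)" and tm: "\<And>m. m \<le> t m"
    and adj: "\<And>m m'. t m < m' \<Longrightarrow> t m \<noteq> t m' \<Longrightarrow> f {a (t m), a (t m')} = i"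
    using step1[where f=f and k=k, OF pU fk] by blast
  obtain q :: "nat \<Rightarrow> nat" where pq: "pos (range (t \<circ> q))"
    and qq0: "\<forall>n n'. n \<noteq> n' \<longrightarrow> t (q n) < q n' \<or> t (q n') < q n"
    using step2[OF pt tm] by (elim exE conjE)
  have qq: "t (q n) < q n' \<or> t (q n') < q n" if "n \<noteq> n'" for n n' using qq0 that by blast
  define B where "B = a ` range (t \<circ> q)"
  have Ba: "B \<subseteq> range a" unfolding B_def by auto
  have Bo: "B \<in> omega_covers" unfolding B_def by (rule pos_image_omega[OF pq])
  have Bh: "f P = i" if PB: "P \<in> [B]\<^bsup>2\<^esup>" for P
  proof -
    have P2: "P \<subseteq> B" "card P = 2" using PB unfolding nsets_def by auto
    from P2(2) obtain x y where xy0: "P = {x, y}" "x \<noteq> y" unfolding card_2_iff by blast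
    have xy: "P = {x, y}" "x \<noteq> y" "x \<in> B" "y \<in> B" using xy0 P2(1) by auto
    obtain n where n: "x = a (t (q n))" using xy(3) unfolding B_def by auto
    obtain n' where n': "y = a (t (q n'))" using xy(4) unfolding B_def by auto
    have nn: "x = a (t (q n))" "y = a (t (q n'))" using n n' by auto
    then have tne: "t (q n) \<noteq> t (q n')" using xy(2) by auto
    then have "n \<noteq> n'" by auto
    then have "t (q n) < q n' \<or> t (q n') < q n" using qq by blast
    then show ?thesis
    proof
      assume "t (q n) < q n'"
      then show ?thesis using adj[of "q n" "q n'"] tne xy(1) nn by simp
    next
      assume "t (q n') < q n"
      then have "f {y, x} = i" using adj[of "q n'" "q n"] tne nn by simp
      then show ?thesis using xy(1) by (simp add: insert_commute)
    qed
  qed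
  have "B \<subseteq> range a \<and> B \<in> omega_covers \<and> (\<forall>P\<in>[B]\<^bsup>2\<^esup>. f P = i)" using Ba Bo Bh by blast
  then have "\<exists>B\<subseteq>range a. B \<in> omega_covers \<and> (\<forall>P\<in>[B]\<^bsup>2\<^esup>. f P = i)" by (rule exI[of _ B])
  then show ?thesis using i by blast
qed

end

lemma S1D:
  fixes Cv :: "nat \<Rightarrow> 'b set"
  assumes "S1 A B" "\<And>n. Cv n \<in> A"
  shows "\<exists>T. (\<forall>n. T n \<in> Cv n) \<and> range T \<in> B"
proof -
  have "(\<forall>n. Cv n \<in> A) \<longrightarrow> (\<exists>T. (\<forall>n. T n \<in> Cv n) \<and> range T \<in> B)"
    using assms(1) unfolding S1_def by (rule spec)
  moreover have "\<forall>n. Cv n \<in> A" using assms(2) by blast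
  ultimately show ?thesis by (rule mp)
qed

lemma both_false:
  fixes A0 :: "'a::topological_space set set"
  assumes A0: "A0 \<in> omega_covers" "\<And>B. B \<subseteq> A0 \<Longrightarrow> B \<notin> omega_covers_of Y"
  shows "\<not> S1 (omega_covers :: 'a set set set) (omega_covers_of Y)"
    and "\<not> partition_rel2 (omega_covers :: 'a set set set) (omega_covers_of Y) 1"
proof -
  show "\<not> S1 (omega_covers :: 'a set set set) (omega_covers_of Y)"
  proof
    assume S1a: "S1 (omega_covers :: 'a set set set) (omega_covers_of Y)"
    have "\<exists>T. (\<forall>n. T n \<in> (\<lambda>_::nat. A0) n) \<and> range T \<in> omega_covers_of Y"
      by (rule S1D[where Cv="\<lambda>_::nat. A0"]) (use S1a A0(1) in auto)
    then obtain T :: "nat \<Rightarrow> 'a set" where T: "\<forall>n. T n \<in> A0" "range T \<in> omega_covers_of Y"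
      by blast
    then have "range T \<subseteq> A0" by auto
    then show False using A0(2) T(2) by blast
  qed
  show "\<not> partition_rel2 (omega_covers :: 'a set set set) (omega_covers_of Y) 1"
  proof
    assume "partition_rel2 (omega_covers :: 'a set set set) (omega_covers_of Y) 1"
    then have "\<forall>\<A>\<in>omega_covers. \<forall>f::'a set set \<Rightarrow> nat. f ` [\<A>]\<^bsup>2\<^esup> \<subseteq> {1..1} \<longrightarrow> (\<exists>i\<in>{1..1}. \<exists>\<B>. \<B> \<subseteq> \<A> \<and> \<B> \<in> omega_covers_of Y \<and> (\<forall>P\<in>[\<B>]\<^bsup>2\<^esup>. f P = i))"
      unfolding partition_rel2_def by assumption
    then have "\<forall>f::'a set set \<Rightarrow> nat. f ` [A0]\<^bsup>2\<^esup> \<subseteq> {1..1} \<longrightarrow> (\<exists>i\<in>{1..1}. \<exists>\<B>. \<B> \<subseteq> A0 \<and> \<B> \<in> omega_covers_of Y \<and> (\<forall>P\<in>[\<B>]\<^bsup>2\<^esup>. f P = i))"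
      using A0(1) by (rule bspec)
    then have "(\<lambda>_. 1::nat) ` [A0]\<^bsup>2\<^esup> \<subseteq> {1..1} \<longrightarrow> (\<exists>i\<in>{1..1}. \<exists>\<B>. \<B> \<subseteq> A0 \<and> \<B> \<in> omega_covers_of Y \<and> (\<forall>P\<in>[\<B>]\<^bsup>2\<^esup>. (\<lambda>_. 1::nat) P = i))"
      by (rule spec)
    moreover have "(\<lambda>_. 1::nat) ` [A0]\<^bsup>2\<^esup> \<subseteq> {1..1}" by auto
    ultimately have "\<exists>i\<in>{1..1}. \<exists>\<B>. \<B> \<subseteq> A0 \<and> \<B> \<in> omega_covers_of Y \<and> (\<forall>P\<in>[\<B>]\<^bsup>2\<^esup>. (\<lambda>_. 1::nat) P = i)"
      by (rule mp)
    then show False using A0(2) by blast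
  qed
qed

theorem theorem4p7:
  fixes Y :: "'a::uniform_space set"
  assumes "uniformity_separated TYPE('a)"
    and "sigma_compact_space TYPE('a)"
  shows "S1 (omega_covers :: 'a set set set) (omega_covers_of Y) \<longleftrightarrow>
         (\<forall>k::nat. k \<ge> 1 \<longrightarrow> partition_rel2 (omega_covers :: 'a set set set) (omega_covers_of Y) k)"
proof (cases "(omega_covers :: 'a set set set) = {}")
  case True
  then show ?thesis unfolding S1_def partition_rel2_def by simp
next
  case False
  then obtain A0 :: "'a set set" where A0: "A0 \<in> omega_covers" by blast
  have opc: "open (- {p::'a})" for p using sep_open_compl[OF assms(1)] .
  show ?thesis
  proof (cases "finite Y")
    case True
    then have "\<And>B. B \<subseteq> A0 \<Longrightarrow> B \<notin> omega_covers_of Y" using omega_covers_of_finite_empty by blast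
    from both_false[OF A0 this] show ?thesis by auto
  next
    case Yinf: False
    show ?thesis
    proof (cases "finite (- Y)")
      case False
      define A1 where "A1 = (\<lambda>p. - {p}) ` (- Y)"
      have "A1 \<in> omega_covers"
      proof (rule omega_coversI)
        show "open U" if "U \<in> A1" for U using that opc unfolding A1_def by auto
        show "UNIV \<notin> A1" unfolding A1_def by auto
        show "\<exists>U\<in>A1. F \<subseteq> U" if "finite F" for F
        proof -
          have "infinite (- Y - F)" using False that by simp
          then have "- Y - F \<noteq> {}" by (intro notI) simp
          then obtain p where "p \<in> - Y - F" by blast
          then show ?thesis unfolding A1_def by auto
        qed
      qed
      moreover have "B \<notin> omega_covers_of Y" if sub: "B \<subseteq> A1" for B
      proof
        assume B: "B \<in> omega_covers_of Y"
        then obtain U where "U \<in> B" using omega_covers_of_nonempty by blast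
        then obtain p where "p \<notin> Y" "U = - {p}" using sub unfolding A1_def by blast
        then have "Y \<subseteq> U" by auto
        then show False using B \<open>U \<in> B\<close> unfolding omega_covers_of_def by blast
      qed
      ultimately have "\<not> S1 (omega_covers :: 'a set set set) (omega_covers_of Y)"
        "\<not> partition_rel2 (omega_covers :: 'a set set set) (omega_covers_of Y) 1"
        using both_false by blast+
      then show ?thesis by auto
    next
      case Zfin: True
      define Z where "Z = - Y"
      have Zf: "finite Z" using Zfin unfolding Z_def .
      have YZ: "Y \<union> Z = UNIV" unfolding Z_def by auto
      have Z1: "{U\<in>\<U>. Z \<subseteq> U} \<in> omega_covers" if "\<U> \<in> omega_covers" for \<U> :: "'a set set"
      proof (rule omega_coversI)
        show "open U" if "U \<in> {U\<in>\<U>. Z \<subseteq> U}" for U using that omega_coversD(1)[OF \<open>\<U> \<in> omega_covers\<close>] by auto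
        show "UNIV \<notin> {U\<in>\<U>. Z \<subseteq> U}" using omega_coversD(2)[OF \<open>\<U> \<in> omega_covers\<close>] by auto
        show "\<exists>U\<in>{U\<in>\<U>. Z \<subseteq> U}. F \<subseteq> U" if "finite F" for F
        proof -
          have "finite (F \<union> Z)" using that Zf by simp
          then obtain U where "U \<in> \<U>" "F \<union> Z \<subseteq> U" using omega_coversD(3)[OF \<open>\<U> \<in> omega_covers\<close>] by blast
          then show ?thesis by auto
        qed
      qed
      have Z2: "\<V> \<in> omega_covers_of Y" if "\<V> \<in> omega_covers" "\<And>V. V \<in> \<V> \<Longrightarrow> Z \<subseteq> V" for \<V> :: "'a set set"
        unfolding omega_covers_of_def
      proof (intro CollectI conjI ballI allI impI)
        fix U assume U: "U \<in> \<V>"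
        then show "open U" using omega_coversD(1)[OF that(1)] by auto
        show "\<not> Y \<subseteq> U"
        proof
          assume "Y \<subseteq> U"
          then have "U = UNIV" using that(2)[OF U] YZ by auto
          then show False using omega_coversD(2)[OF that(1)] U by auto
        qed
      next
        fix F :: "'a set" assume "finite F \<and> F \<subseteq> Y"
        then show "\<exists>U\<in>\<V>. F \<subseteq> U" using omega_coversD(3)[OF that(1)] by auto
      qed
      show ?thesis
      proof
        assume S1: "S1 (omega_covers :: 'a set set set) (omega_covers_of Y)"
        have S1Z: "\<exists>T. (\<forall>n. T n \<in> Cv n) \<and> (\<forall>F. finite F \<longrightarrow> (\<exists>n. F \<subseteq> T n))"
          if Cvh: "\<And>n. Cv n \<in> omega_covers" "\<And>n V. V \<in> Cv n \<Longrightarrow> Z \<subseteq> V" for Cv :: "nat \<Rightarrow> 'a set set"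
        proof -
          obtain T where T: "\<forall>n. T n \<in> Cv n" "range T \<in> omega_covers_of Y"
            using S1D[of _ _ Cv, OF S1 Cvh(1)] by blast
          have ex: "\<exists>n. F \<subseteq> T n" if Ff: "finite F" for F
          proof -
            have "finite (F \<inter> Y)" "F \<inter> Y \<subseteq> Y" using Ff by auto
            then have "\<exists>U\<in>range T. F \<inter> Y \<subseteq> U" by (rule omega_covers_ofD[OF T(2)])
            then obtain n where n: "F \<inter> Y \<subseteq> T n" by blast
            have "Z \<subseteq> T n" using Cvh(2)[of "T n" n] T(1) by blast
            then have "F \<subseteq> T n" using n unfolding Z_def by blast
            then show ?thesis by blast
          qed
          have "(\<forall>n. T n \<in> Cv n) \<and> (\<forall>F. finite F \<longrightarrow> (\<exists>n. F \<subseteq> T n))" using T(1) ex by blast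
          then show ?thesis by (rule exI[of _ T])
        qed
        show "\<forall>k\<ge>1. partition_rel2 (omega_covers :: 'a set set set) (omega_covers_of Y) k"
          unfolding partition_rel2_def
        proof (intro allI impI ballI)
          fix k :: nat and A :: "'a set set" and f :: "'a set set \<Rightarrow> nat"
          assume k: "1 \<le> k" and A: "A \<in> omega_covers" and f: "f ` [A]\<^bsup>2\<^esup> \<subseteq> {1..k}"
          obtain V where V: "V \<subseteq> {U\<in>A. Z \<subseteq> U}" "countable V" "V \<in> omega_covers"
            using sigma_compact_countable_omega[OF assms(2) Z1[OF A]] by blast
          have Vinf: "infinite V" using omega_covers_infinite[OF V(3)] .
          define a where "a = from_nat_into V"
          have bij: "bij_betw a UNIV V" unfolding a_def using bij_betw_from_nat_into[OF V(2) Vinf] .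
          then have ainj: "inj a" and arange: "range a = V" by (auto simp: bij_betw_def)
          interpret R: ramsey_ctx a Z
          proof
            fix j
            have "a j \<in> V" using arange by auto
            then show "open (a j)" "a j \<noteq> UNIV" "Z \<subseteq> a j"
              using omega_coversD(1,2)[OF V(3)] V(1) by auto
          next
            fix Cv :: "nat \<Rightarrow> 'a set set"
            assume "\<And>n. Cv n \<in> omega_covers" "\<And>n V. V \<in> Cv n \<Longrightarrow> Z \<subseteq> V"
            then show "\<exists>T. (\<forall>n. T n \<in> Cv n) \<and> (\<forall>F. finite F \<longrightarrow> (\<exists>n. F \<subseteq> T n))" by (rule S1Z)
          qed
          have pU: "R.pos UNIV" unfolding R.pos_def
          proof (intro allI impI)
            fix F :: "'a set" assume "finite F"
            then obtain U where "U \<in> V" "F \<subseteq> U" using omega_coversD(3)[OF V(3)] by blast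
            then show "\<exists>j\<in>UNIV. F \<subseteq> a j" using arange by auto
          qed
          have fk: "f {a n, a j} \<in> {1..k}" if "j \<noteq> n" for n j
          proof -
            have "a n \<noteq> a j" using ainj that by (auto dest: injD)
            moreover have "a n \<in> A" "a j \<in> A" using arange V(1) by auto
            ultimately have "{a n, a j} \<in> [A]\<^bsup>2\<^esup>" unfolding nsets_def by auto
            then show ?thesis by (intro subsetD[OF f] imageI)
          qed
          have "\<exists>i\<in>{1..k}. \<exists>B\<subseteq>range a. B \<in> omega_covers \<and> (\<forall>P\<in>[B]\<^bsup>2\<^esup>. f P = i)"
            by (rule R.ramsey_core[where f=f and k=k, OF pU fk])
          then obtain i B where i: "i \<in> {1..k}" and B: "B \<subseteq> range a" "B \<in> omega_covers"
            and hom: "\<forall>P\<in>[B]\<^bsup>2\<^esup>. f P = i"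
            by (elim bexE exE conjE)
          have BA: "B \<subseteq> A" using B(1) arange V(1) by auto
          have "B \<in> omega_covers_of Y"
            using Z2[OF B(2)] B(1) arange V(1) by auto
          then show "\<exists>i\<in>{1..k}. \<exists>\<B>. \<B> \<subseteq> A \<and> \<B> \<in> omega_covers_of Y \<and> (\<forall>P\<in>[\<B>]\<^bsup>2\<^esup>. f P = i)"
            using i BA hom by blast
        qed
      next
        assume PR: "\<forall>k\<ge>1. partition_rel2 (omega_covers :: 'a set set set) (omega_covers_of Y) k"
        show "S1 (omega_covers :: 'a set set set) (omega_covers_of Y)"
          unfolding S1_def
        proof (intro allI impI)
          fix Cv :: "nat \<Rightarrow> 'a set set"
          assume Cv: "\<forall>n. Cv n \<in> omega_covers"
          obtain y :: "nat \<Rightarrow> 'a" where y: "inj y" "range y \<subseteq> Y"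
            using infinite_countable_subset[OF Yinf] by blast
          have exZ: "\<exists>V. V \<in> Cv n \<and> F \<union> Z \<subseteq> V" if "finite F" for n F
            using omega_coversD(3)[of "Cv n" "F \<union> Z"] Cv that Zf by auto
          define W where "W = {V \<inter> - {y n} | n V. V \<in> Cv n \<and> Z \<subseteq> V}"
          have Wom: "W \<in> omega_covers"
          proof (rule omega_coversI)
            show "open U" if UW: "U \<in> W" for U
            proof -
              obtain n V where nV: "U = V \<inter> - {y n}" "V \<in> Cv n" using UW unfolding W_def by blast
              have "open V" using omega_coversD(1)[of "Cv n" V] Cv nV(2) by blast
              then show ?thesis using nV(1) opc by auto
            qed
            show "UNIV \<notin> W" unfolding W_def by auto
            show "\<exists>U\<in>W. F \<subseteq> U" if Ff: "finite F" for F
            proof -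
              have "finite (y -` F)" using finite_vimageI[OF Ff y(1)] .
              then obtain n where n: "n \<notin> y -` F" using ex_new_if_finite[OF infinite_UNIV_nat] by blast
              obtain V where "V \<in> Cv n" "F \<union> Z \<subseteq> V" using exZ[OF Ff] by blast
              then have "V \<inter> - {y n} \<in> W" "F \<subseteq> V \<inter> - {y n}" using n unfolding W_def by auto
              then show ?thesis by blast
            qed
          qed
          define sel where "sel w = (SOME p. snd p \<in> Cv (fst p) \<and> Z \<subseteq> snd p \<and> w = snd p \<inter> - {y (fst p)})" for w
          define tag where "tag w = fst (sel w)" for w
          define rep where "rep w = snd (sel w)" for w
          have selp: "rep w \<in> Cv (tag w) \<and> Z \<subseteq> rep w \<and> w = rep w \<inter> - {y (tag w)}" if "w \<in> W" for w
          proof -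
            have "\<exists>p. snd p \<in> Cv (fst p) \<and> Z \<subseteq> snd p \<and> w = snd p \<inter> - {y (fst p)}"
              using that unfolding W_def by auto
            then have "snd (sel w) \<in> Cv (fst (sel w)) \<and> Z \<subseteq> snd (sel w) \<and> w = snd (sel w) \<inter> - {y (fst (sel w))}"
              unfolding sel_def by (rule someI_ex)
            then show ?thesis unfolding tag_def rep_def .
          qed
          define f where "f P = (if \<forall>w\<in>P. \<forall>w'\<in>P. tag w = tag w' then 1 else (2::nat))" for P
          have "partition_rel2 (omega_covers :: 'a set set set) (omega_covers_of Y) 2" using PR by simp
          moreover have "f ` [W]\<^bsup>2\<^esup> \<subseteq> {1..2}" unfolding f_def by auto
          ultimately obtain i B where i: "i \<in> {1..2}" and B: "B \<subseteq> W" "B \<in> omega_covers_of Y"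
            and hom: "\<forall>P\<in>[B]\<^bsup>2\<^esup>. f P = i"
            unfolding partition_rel2_def using Wom by blast
          have pair: "{w, w'} \<in> [B]\<^bsup>2\<^esup>" if "w \<in> B" "w' \<in> B" "w \<noteq> w'" for w w'
            using that unfolding nsets_def by auto
          have Bcov: "\<exists>w\<in>B. F \<subseteq> w" if "finite F" "F \<subseteq> Y" for F
            using B(2) that unfolding omega_covers_of_def by blast
          have "i \<noteq> 1"
          proof
            assume i1: "i = 1"
            obtain w0 where w0: "w0 \<in> B" using omega_covers_of_nonempty[OF B(2)] by blast
            have same: "tag w = tag w0" if "w \<in> B" for w
            proof (cases "w = w0")
              case False
              then have "f {w0, w} = 1" using hom pair[OF w0 that] i1 by auto
              then show ?thesis unfolding f_def by (auto split: if_splits)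
            qed simp
            have "y (tag w0) \<in> Y" using y(2) by auto
            then obtain w where w: "w \<in> B" "y (tag w0) \<in> w" using Bcov[of "{y (tag w0)}"] by auto
            have "w = rep w \<inter> - {y (tag w)}" using selp w(1) B(1) by blast
            then show False using w same[OF w(1)] by auto
          qed
          then have i2: "i = 2" using i by auto
          have injt: "inj_on tag B"
          proof (rule inj_onI)
            fix w w' assume ww: "w \<in> B" "w' \<in> B" "tag w = tag w'"
            show "w = w'"
            proof (rule ccontr)
              assume "w \<noteq> w'"
              then have "f {w, w'} = 2" using hom pair[OF ww(1,2)] i2 by auto
              then show False using ww(3) unfolding f_def by (auto split: if_splits)
            qed
          qed
          define dflt where "dflt n = (SOME V. V \<in> Cv n \<and> Z \<subseteq> V)" for n
          have dfltp: "dflt n \<in> Cv n \<and> Z \<subseteq> dflt n" for n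
          proof -
            have "\<exists>V. V \<in> Cv n \<and> Z \<subseteq> V" using exZ[of "{}" n] by auto
            then show ?thesis unfolding dflt_def by (rule someI_ex)
          qed
          define T where "T n = (if n \<in> tag ` B then rep (inv_into B tag n) else dflt n)" for n
          have Tp: "T n \<in> Cv n \<and> Z \<subseteq> T n" for n
          proof (cases "n \<in> tag ` B")
            case True
            then have "inv_into B tag n \<in> B" "tag (inv_into B tag n) = n"
              by (auto intro: inv_into_into f_inv_into_f)
            then show ?thesis using selp[of "inv_into B tag n"] B(1) True unfolding T_def by auto
          next
            case False then show ?thesis using dfltp unfolding T_def by auto
          qed
          have "range T \<in> omega_covers_of Y"
            unfolding omega_covers_of_def
          proof (intro CollectI conjI ballI allI impI)
            fix U assume "U \<in> range T"
            then obtain n where n: "U = T n" by auto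
            show "open U" using omega_coversD(1)[of "Cv n" "T n"] Cv Tp[of n] n by blast
            show "\<not> Y \<subseteq> U"
            proof
              assume "Y \<subseteq> U"
              then have "U = UNIV" using n Tp[of n] YZ by auto
              then have "UNIV \<in> Cv n" using n Tp[of n] by auto
              then show False using omega_coversD(2)[of "Cv n"] Cv by blast
            qed
          next
            fix F :: "'a set" assume F: "finite F \<and> F \<subseteq> Y"
            then obtain w where w: "w \<in> B" "F \<subseteq> w" using Bcov by blast
            have "T (tag w) = rep w" unfolding T_def using w(1) injt by auto
            moreover have "w \<subseteq> rep w" using selp[of w] w(1) B(1) by blast
            ultimately show "\<exists>U\<in>range T. F \<subseteq> U" using w(2) by blast
          qed
          then show "\<exists>T. (\<forall>n. T n \<in> Cv n) \<and> range T \<in> omega_covers_of Y" using Tp by blast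
        qed
      qed
    qed
  qed
qed

end
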